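(* Let $\phi:\mathbb{R}^{n\times n}\to\mathbb{R}$ be twice differentiable, $L$-gradient Lipschitz and $(\mu,2r)$-restricted strongly convex, let $M^\star=\arg\min\phi$ satisfy $M^\star\succeq0$ and $r^\star=\operatorname{rank}(M^\star)\le r$, let $f(X)=\phi(XX^T)$ for $X\in\mathbb{R}^{n\times r}$ and let $X^\star$ be a minimizer of $f$. If $f(X)-f(X^\star)\le\frac{\mu}{2(1+L/\mu)}\lambda_{r^\star}^2(M^\star)$, then \[ \lambda_{r^\star}(XX^T)\ge\left(\sqrt{1+L/\mu}-1\right)\|XX^T-M^\star\|_F. \]
   Context: $\phi$ is $L$-gradient Lipschitz if $\|\nabla\phi(M+E)-\nabla\phi(M)\|_F\le L\|E\|_F$ for all $M,E$; $(\mu,k)$-restricted strongly convex if $\langle\nabla^2\phi(M)[E],E\rangle\ge\mu\|E\|_F^2$ for all $M,E\in\mathbb{R}^{n\times n}$ of rank at most $k$. Eigenvalues are ordered decreasingly, $\lambda_1\ge\lambda_2\ge\cdots$. *)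

theory Defs
  imports "HOL-Analysis.Analysis" "HOL-Computational_Algebra.Polynomial"
begin

text \<open>Matrices are elements of real^'n^'n; the inner product on this type is the
Frobenius inner product and norm is the Frobenius norm.\<close>

definition grad :: "(real^'n^'m \<Rightarrow> real) \<Rightarrow> real^'n^'m \<Rightarrow> real^'n^'m" where
  "grad \<phi> M = (SOME G. (\<phi> has_derivative (\<lambda>E. E \<bullet> G)) (at M))"

definition twice_differentiable :: "(real^'n^'m \<Rightarrow> real) \<Rightarrow> bool" where
  "twice_differentiable \<phi> \<longleftrightarrow>
     (\<forall>M. \<phi> differentiable (at M)) \<and> (\<forall>M. grad \<phi> differentiable (at M))"

definition hess :: "(real^'n^'m \<Rightarrow> real) \<Rightarrow> real^'n^'m \<Rightarrow> real^'n^'m \<Rightarrow> real^'n^'m" where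
  "hess \<phi> M E = frechet_derivative (grad \<phi>) (at M) E"

definition gradient_lipschitz :: "real \<Rightarrow> (real^'n^'m \<Rightarrow> real) \<Rightarrow> bool" where
  "gradient_lipschitz L \<phi> \<longleftrightarrow>
     (\<forall>M E. norm (grad \<phi> (M + E) - grad \<phi> M) \<le> L * norm E)"

definition restricted_strongly_convex :: "real \<Rightarrow> nat \<Rightarrow> (real^'n^'m \<Rightarrow> real) \<Rightarrow> bool" where
  "restricted_strongly_convex \<mu> k \<phi> \<longleftrightarrow>
     (\<forall>M E. rank M \<le> k \<and> rank E \<le> k \<longrightarrow> hess \<phi> M E \<bullet> E \<ge> \<mu> * (norm E)\<^sup>2)"

definition psd :: "real^'n^'n \<Rightarrow> bool" where
  "psd M \<longleftrightarrow> transpose M = M \<and> (\<forall>v. v \<bullet> (M *v v) \<ge> 0)"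

definition charpoly :: "real^'n^'n \<Rightarrow> real poly" where
  "charpoly A = det (\<chi> i j. (if i = j then [:0, 1:] else 0) - [:A $ i $ j:])"

text \<open>Eigenvalues counted with multiplicity, ordered decreasingly:
  eigval A k = lambda_k(A) for 1 <= k <= n (1-based).\<close>
definition eigval :: "real^'n^'n \<Rightarrow> nat \<Rightarrow> real" where
  "eigval A k = rev (sorted_list_of_multiset (proots (charpoly A))) ! (k - 1)"

end

theory Submission
  imports Defs
begin

lemma sym_inner:
  fixes A :: "real^'n^'n"
  assumes "transpose A = A"
  shows "x \<bullet> (A *v y) = (A *v x) \<bullet> y"
  by (metis assms dot_lmul_matrix transpose_matrix_vector)

lemma quad_nonpos_imp:
  fixes a b :: real
  assumes "\<And>t. 2 * t * a + t\<^sup>2 * b \<le> 0"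
  shows "a = 0"
proof (rule ccontr)
  assume a: "a \<noteq> 0"
  define c where "c = \<bar>b\<bar> + 1"
  define t where "t = a / c"
  have pos: "c > 0" unfolding c_def by simp
  have "2 * t * a + t\<^sup>2 * b = a\<^sup>2 * (2 * c + b) / c^2"
    unfolding t_def using pos by (simp add: field_simps power2_eq_square)
  also have "\<dots> > 0"
    using a pos unfolding c_def by (intro divide_pos_pos mult_pos_pos) (auto simp: abs_if)
  finally show False using assms[of t] by simp
qed

lemma max_eigvec:
  fixes A :: "real^'n^'n"
  assumes sym: "transpose A = A" and S: "subspace S" and inv: "\<forall>x\<in>S. A *v x \<in> S"
    and v: "v \<in> S" "norm v = 1"
    and max: "\<forall>y\<in>S. norm y = 1 \<longrightarrow> y \<bullet> (A *v y) \<le> v \<bullet> (A *v v)"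
  shows "A *v v = (v \<bullet> (A *v v)) *\<^sub>R v"
proof -
  define l where "l = v \<bullet> (A *v v)"
  have key: "((A *v v) - l *\<^sub>R v) \<bullet> w = 0" if w: "w \<in> S" for w
  proof -
    define a where "a = ((A *v v) - l *\<^sub>R v) \<bullet> w"
    define b where "b = w \<bullet> (A *v w) - l * (w \<bullet> w)"
    have "2 * t * a + t\<^sup>2 * b \<le> 0" for t
    proof -
      let ?z = "v + t *\<^sub>R w"
      have zS: "?z \<in> S" using S v w by (simp add: subspace_add subspace_scale)
      have ineq: "?z \<bullet> (A *v ?z) \<le> l * (?z \<bullet> ?z)"
      proof (cases "?z = 0")
        case True then show ?thesis by simp
      next
        case False
        define u where "u = (1 / norm ?z) *\<^sub>R ?z"
        have "u \<in> S" using zS S u_def by (simp add: subspace_scale)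
        moreover have "norm u = 1" using False u_def by simp
        ultimately have "u \<bullet> (A *v u) \<le> l" using max l_def by blast
        moreover have "u \<bullet> (A *v u) = (?z \<bullet> (A *v ?z)) / (norm ?z)^2"
          unfolding u_def by (simp add: matrix_vector_mult_scaleR inner_scaleR_left inner_scaleR_right power2_eq_square)
        moreover have "norm ?z > 0" using False by simp
        ultimately have "?z \<bullet> (A *v ?z) \<le> l * (norm ?z)^2"
          by (simp add: divide_le_eq)
        then show ?thesis by (simp add: power2_norm_eq_inner)
      qed
      have sw: "v \<bullet> (A *v w) = (A *v v) \<bullet> w" using sym_inner[OF sym] .
      have e1: "?z \<bullet> (A *v ?z) = l + 2 * t * ((A *v v) \<bullet> w) + t\<^sup>2 * (w \<bullet> (A *v w))"
        using sw unfolding l_def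
        by (simp add: matrix_vector_right_distrib matrix_vector_mult_scaleR inner_add_left inner_add_right
            inner_commute[of w "A *v v"] power2_eq_square algebra_simps)
      have vv: "v \<bullet> v = 1" using v(2) by (metis norm_eq_sqrt_inner real_sqrt_eq_1_iff)
      have e2: "?z \<bullet> ?z = 1 + 2 * t * (v \<bullet> w) + t\<^sup>2 * (w \<bullet> w)"
        using vv by (simp add: inner_add_left inner_add_right inner_commute[of w v] power2_eq_square
            algebra_simps)
      have "2 * t * a + t\<^sup>2 * b = ?z \<bullet> (A *v ?z) - l * (?z \<bullet> ?z)"
        unfolding e1 e2 a_def b_def by (simp add: inner_diff_left algebra_simps)
      then show ?thesis using ineq by linarith
    qed
    then show ?thesis using quad_nonpos_imp a_def by blast
  qed
  have "(A *v v) - l *\<^sub>R v \<in> S" using S inv v by (simp add: subspace_diff subspace_scale)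
  from key[OF this] show ?thesis unfolding l_def by simp
qed

lemma spectral_subspace:
  fixes A :: "real^'n^'n"
  assumes sym: "transpose A = A"
  shows "subspace S \<Longrightarrow> (\<forall>x\<in>S. A *v x \<in> S) \<Longrightarrow> \<exists>B. B \<subseteq> S \<and> pairwise orthogonal B \<and>
     (\<forall>v\<in>B. norm v = 1 \<and> A *v v = (v \<bullet> (A *v v)) *\<^sub>R v) \<and> span B = S"
proof (induction "dim S" arbitrary: S rule: less_induct)
  case less
  note S = less.prems(1) and inv = less.prems(2)
  show ?case
  proof (cases "S \<subseteq> {0}")
    case True
    then have "S = {0}" using S subspace_0 by blast
    then show ?thesis by (intro exI[of _ "{}"]) auto
  next
    case False
    then obtain x where x: "x \<in> S" "x \<noteq> 0" by blast
    define K where "K = S \<inter> sphere 0 1"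
    have "compact K" unfolding K_def
      by (simp add: S closed_Int_compact closed_subspace)
    moreover have "(1 / norm x) *\<^sub>R x \<in> K" unfolding K_def using x S
      by (simp add: subspace_scale)
    then have "K \<noteq> {}" by blast
    moreover have "continuous_on K (\<lambda>y. y \<bullet> (A *v y))"
      by (intro continuous_intros linear_continuous_on matrix_vector_mul_linear)
    ultimately obtain v where vK: "v \<in> K" and vmax: "\<forall>y\<in>K. y \<bullet> (A *v y) \<le> v \<bullet> (A *v v)"
      using continuous_attains_sup by blast
    have v: "v \<in> S" "norm v = 1" using vK K_def by auto
    have ev: "A *v v = (v \<bullet> (A *v v)) *\<^sub>R v"
      by (rule max_eigvec[OF sym S inv v]) (use vmax K_def in auto)
    have vv: "v \<bullet> v = 1" using v(2) by (metis norm_eq_sqrt_inner real_sqrt_eq_1_iff)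
    obtain l where ev': "A *v v = l *\<^sub>R v" using ev by blast
    define S' where "S' = {y\<in>S. v \<bullet> y = 0}"
    have S': "subspace S'" using S unfolding S'_def subspace_def
      by (auto simp: inner_add_right)
    have inv': "\<forall>y\<in>S'. A *v y \<in> S'"
    proof
      fix y assume y: "y \<in> S'"
      have "v \<bullet> (A *v y) = (A *v v) \<bullet> y" using sym_inner[OF sym] .
      also have "\<dots> = 0" using y ev' unfolding S'_def by simp
      finally show "A *v y \<in> S'" using y inv unfolding S'_def by auto
    qed
    have "v \<notin> S'" using vv unfolding S'_def by auto
    then have "S' \<subset> S" using v unfolding S'_def by blast
    then have "span S' \<subset> span S" by (metis span_eq_iff S S')
    then have "dim S' < dim S" by (rule dim_psubset)
    from less.hyps[OF this S' inv'] obtain B' where B': "B' \<subseteq> S'" "pairwise orthogonal B'"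
      "\<forall>v\<in>B'. norm v = 1 \<and> A *v v = (v \<bullet> (A *v v)) *\<^sub>R v" "span B' = S'" by blast
    have orth: "orthogonal v b" "orthogonal b v" if "b \<in> B'" for b
      using B'(1) that unfolding S'_def orthogonal_def by (auto simp: inner_commute)
    show ?thesis
    proof (intro exI[of _ "insert v B'"] conjI)
      show "insert v B' \<subseteq> S" using v B'(1) S'_def by auto
      show "pairwise orthogonal (insert v B')" using B'(2) orth
        by (auto simp: pairwise_insert)
      show "\<forall>w\<in>insert v B'. norm w = 1 \<and> A *v w = (w \<bullet> (A *v w)) *\<^sub>R w" using B'(3) v ev by blast
      show "span (insert v B') = S"
      proof
        show "span (insert v B') \<subseteq> S" using v B'(1) S'_def S
          by (metis (no_types, lifting) insert_subset mem_Collect_eq span_minimal subset_iff)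
        show "S \<subseteq> span (insert v B')"
        proof
          fix y assume y: "y \<in> S"
          have "y - (v \<bullet> y) *\<^sub>R v \<in> S'" using y v S vv unfolding S'_def
            by (auto simp: subspace_diff subspace_scale inner_diff_right)
          then have "y - (v \<bullet> y) *\<^sub>R v \<in> span (insert v B')"
            using B'(4) span_mono[of B' "insert v B'"] by auto
          moreover have "(v \<bullet> y) *\<^sub>R v \<in> span (insert v B')"
            by (simp add: span_base span_mul)
          ultimately have "(y - (v \<bullet> y) *\<^sub>R v) + (v \<bullet> y) *\<^sub>R v \<in> span (insert v B')"
            by (rule span_add)
          then show "y \<in> span (insert v B')" by simp
        qed
      qed
    qed
  qed
qed

lemma spectral:
  fixes A :: "real^'n^'n"
  assumes sym: "transpose A = A"
  obtains u :: "'n \<Rightarrow> real^'n" and d :: "'n \<Rightarrow> real"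
  where "\<And>i j. u i \<bullet> u j = (if i = j then 1 else 0)" "\<And>i. A *v u i = d i *\<^sub>R u i"
proof -
  obtain B where B: "pairwise orthogonal B"
     "\<forall>v\<in>B. norm v = 1 \<and> A *v v = (v \<bullet> (A *v v)) *\<^sub>R v" "span B = UNIV"
    using spectral_subspace[OF sym, of UNIV] by auto
  have "0 \<notin> B" using B(2) by fastforce
  then have ind: "independent B" using B(1) pairwise_orthogonal_independent by blast
  then have fin: "finite B" using independent_imp_finite by blast
  have "card B = dim (span B)" by (rule dim_span_eq_card_independent[OF ind, symmetric])
  also have "\<dots> = CARD('n)" using B(3) by (simp add: dim_UNIV)
  finally have "card (UNIV :: 'n set) = card B" by simp
  then obtain e where e: "bij_betw e (UNIV :: 'n set) B"
    using finite_same_card_bij[OF finite fin] by blast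
  have eB: "e i \<in> B" for i using e bij_betwE by blast
  have on: "e i \<bullet> e j = (if i = j then 1 else 0)" for i j
  proof (cases "i = j")
    case True
    then show ?thesis using B(2) eB[of i] by (simp add: dot_square_norm)
  next
    case False
    then have "e i \<noteq> e j" using e by (metis bij_betw_inv_into_left UNIV_I)
    then show ?thesis using False B(1) eB[of i] eB[of j] unfolding pairwise_def orthogonal_def by auto
  qed
  show ?thesis
    by (rule that[of e "\<lambda>i. e i \<bullet> (A *v e i)"]) (use on B(2) eB in auto)
qed

locale onb =
  fixes u :: "'n::finite \<Rightarrow> real^'n"
  assumes on: "\<And>i j. u i \<bullet> u j = (if i = j then 1 else 0)"
begin

lemma inj_u: "inj u"
  by (rule injI) (metis on zero_neq_one)

lemma indep: "independent (range u)"
proof -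
  have "pairwise orthogonal (range u)"
    unfolding pairwise_def orthogonal_def using on by auto
  moreover have "0 \<notin> range u" using on by (metis imageE inner_zero_left zero_neq_one)
  ultimately show ?thesis by (rule pairwise_orthogonal_independent)
qed

lemma span_u: "span (range u) = UNIV"
proof -
  have "dim (span (range u)) = card (range u)" by (rule dim_span_eq_card_independent[OF indep])
  also have "\<dots> = CARD('n)" using inj_u by (simp add: card_image)
  finally show ?thesis by (metis dim_eq_full dim_span DIM_cart DIM_real mult.right_neutral)
qed

lemma expand: "x = (\<Sum>i\<in>UNIV. (u i \<bullet> x) *\<^sub>R u i)"
proof -
  define y where "y = x - (\<Sum>i\<in>UNIV. (u i \<bullet> x) *\<^sub>R u i)"
  have uy: "u j \<bullet> y = 0" for j
    unfolding y_def by (simp add: inner_diff_right inner_sum_right on if_distrib cong: if_cong)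
  have "y \<in> span (range u)" using span_u by simp
  then obtain c where "y = (\<Sum>v\<in>range u. c v *\<^sub>R v)"
    using span_finite[of "range u"] by auto
  then have "y \<bullet> y = (\<Sum>v\<in>range u. c v * (v \<bullet> y))" by (simp add: inner_sum_left)
  also have "\<dots> = 0" using uy by (auto intro!: sum.neutral)
  finally have "y = 0" by simp
  then show ?thesis unfolding y_def by simp
qed

lemma coord_inner: "x \<bullet> y = (\<Sum>i\<in>UNIV. (u i \<bullet> x) * (u i \<bullet> y))"
proof -
  have "x \<bullet> y = (\<Sum>i\<in>UNIV. (u i \<bullet> x) *\<^sub>R u i) \<bullet> y" using expand[of x] by simp
  also have "\<dots> = (\<Sum>i\<in>UNIV. (u i \<bullet> x) * (u i \<bullet> y))" by (simp add: inner_sum_left)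
  finally show ?thesis .
qed

lemma apply_eig:
  fixes A :: "real^'n^'n"
  assumes ev: "\<And>i. A *v u i = d i *\<^sub>R u i"
  shows "A *v x = (\<Sum>i\<in>UNIV. (d i * (u i \<bullet> x)) *\<^sub>R u i)"
proof -
  have "A *v x = A *v (\<Sum>i\<in>UNIV. (u i \<bullet> x) *\<^sub>R u i)" using expand[of x] by simp
  also have "\<dots> = (\<Sum>i\<in>UNIV. (u i \<bullet> x) *\<^sub>R (A *v u i))"
    by (simp add: vec.sum matrix_vector_mult_scaleR)
  also have "\<dots> = (\<Sum>i\<in>UNIV. (d i * (u i \<bullet> x)) *\<^sub>R u i)" by (simp add: ev mult.commute)
  finally show ?thesis .
qed

lemma quad_eig:
  fixes A :: "real^'n^'n"
  assumes ev: "\<And>i. A *v u i = d i *\<^sub>R u i"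
  shows "x \<bullet> (A *v x) = (\<Sum>i\<in>UNIV. d i * (u i \<bullet> x)\<^sup>2)"
  unfolding apply_eig[OF ev] by (simp add: inner_sum_right power2_eq_square inner_commute mult.assoc)

lemma norm_sq: "x \<bullet> x = (\<Sum>i\<in>UNIV. (u i \<bullet> x)\<^sup>2)"
  using coord_inner[of x x] by (simp add: power2_eq_square)

end

lemma poly_entry: "poly ((if b then [:0, 1:] else 0) - [:a:]) x = (if b then x else 0) - (a::real)"
  by auto

lemma sum_single_mset: "finite A \<Longrightarrow> (\<Sum>i\<in>A. {#f i#}) = image_mset f (mset_set A)"
  by (induction A rule: finite_induct) auto

lemma poly_charpoly:
  fixes A :: "real^'n^'n"
  shows "poly (charpoly A) x = det (\<chi> i j. (if i = j then x else 0) - A $ i $ j)"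
  unfolding charpoly_def det_def
  by (simp add: poly_sum poly_prod poly_entry del: poly_diff)

lemma det_eig:
  fixes A :: "real^'n^'n"
  assumes "onb u" and ev: "\<And>i. A *v u i = d i *\<^sub>R u i"
  shows "det (\<chi> i j. (if i = j then x else 0) - A $ i $ j) = (\<Prod>i\<in>UNIV. x - d i)"
proof -
  interpret onb u by fact
  define N where "N = x *\<^sub>R mat 1 - A"
  have Nchi: "(\<chi> i j. (if i = j then x else 0) - A $ i $ j) = N"
    unfolding N_def by (simp add: vec_eq_iff mat_def)
  define Q where "Q = (\<chi> a i. u i $ a :: real^'n^'n)"
  define D where "D = (\<chi> i j. if i = j then x - d i else 0 :: real^'n^'n)"
  have Nu: "N *v u i = (x - d i) *\<^sub>R u i" for i
  proof -
    have "N *v u i = x *\<^sub>R u i - A *v u i"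
      unfolding N_def by (metis matrix_vector_mult_diff_rdistrib matrix_vector_mul_lid scaleR_matrix_vector_assoc)
    then show ?thesis using ev[of i] by (simp add: algebra_simps)
  qed
  have "N ** Q = Q ** D"
  proof -
    have "(N ** Q) $ a $ i = (N *v u i) $ a" for a i
      unfolding Q_def by (simp add: matrix_matrix_mult_def matrix_vector_mult_def)
    moreover have "(Q ** D) $ a $ i = (x - d i) * u i $ a" for a i
      unfolding Q_def D_def by (simp add: matrix_matrix_mult_def if_distrib cong: if_cong)
    ultimately show ?thesis using Nu by (simp add: vec_eq_iff mult.commute)
  qed
  then have "det N * det Q = det Q * det D" by (metis det_mul)
  moreover have "transpose Q ** Q = mat 1"
    unfolding Q_def by (simp add: vec_eq_iff matrix_matrix_mult_def transpose_def mat_def on[symmetric] inner_vec_def)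
  then have "det Q * det Q = 1" by (metis det_I det_mul det_transpose)
  then have "det Q \<noteq> 0" by auto
  ultimately have "det N = det D" by simp
  also have "det D = (\<Prod>i\<in>UNIV. x - d i)" unfolding D_def by (subst det_diagonal) auto
  finally show ?thesis unfolding Nchi .
qed

lemma charpoly_eig:
  fixes A :: "real^'n^'n"
  assumes "onb u" and ev: "\<And>i. A *v u i = d i *\<^sub>R u i"
  shows "charpoly A = (\<Prod>i\<in>UNIV. [:- d i, 1:])"
proof -
  have "poly (charpoly A) = poly (\<Prod>i\<in>UNIV. [:- d i, 1:])"
    by (rule ext) (simp add: poly_charpoly det_eig[OF assms] poly_prod)
  then show ?thesis by (simp add: poly_eq_poly_eq_iff)
qed

lemma proots_eig:
  fixes A :: "real^'n^'n"
  assumes "onb u" and ev: "\<And>i. A *v u i = d i *\<^sub>R u i"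
  shows "proots (charpoly A) = image_mset d (mset_set UNIV)"
proof -
  have "proots (charpoly A) = (\<Sum>i\<in>UNIV. proots [:- d i, 1:])"
    unfolding charpoly_eig[OF assms] by (rule proots_prod) auto
  also have "\<dots> = (\<Sum>i\<in>UNIV. {#d i#})" by (simp add: proots_linear_factor)
  also have "\<dots> = image_mset d (mset_set UNIV)" by (simp add: sum_single_mset)
  finally show ?thesis .
qed

lemma card_filter_mset:
  fixes d :: "'n::finite \<Rightarrow> real"
  assumes "mset xs = image_mset d (mset_set UNIV)"
  shows "card {i. P (d i)} = card {k. k < length xs \<and> P (xs ! k)}"
proof -
  have "card {k. k < length xs \<and> P (xs ! k)} = length (filter P xs)"
    by (simp add: length_filter_conv_card)
  also have "\<dots> = size (mset (filter P xs))" by (simp only: size_mset)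
  also have "\<dots> = size (filter_mset P (image_mset d (mset_set UNIV)))"
    by (simp add: assms)
  also have "\<dots> = size (filter_mset (\<lambda>i. P (d i)) (mset_set (UNIV :: 'n set)))"
    by (simp add: filter_mset_image_mset)
  also have "\<dots> = card {i. P (d i)}" by (simp add: filter_mset_mset_set)
  finally show ?thesis by simp
qed

lemma sorted_count:
  fixes d :: "'n::finite \<Rightarrow> real"
  defines "xs \<equiv> rev (sorted_list_of_multiset (image_mset d (mset_set UNIV)))"
  assumes j: "j < CARD('n)"
  shows "j + 1 \<le> card {i. xs ! j \<le> d i}" and "CARD('n) - j \<le> card {i. d i \<le> xs ! j}"
    and "xs ! j \<in> range d"
proof -
  define s where "s = sorted_list_of_multiset (image_mset d (mset_set UNIV))"
  have ms: "mset xs = image_mset d (mset_set UNIV)" unfolding xs_def by simp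
  have len: "length xs = CARD('n)" using arg_cong[OF ms, of size] by simp
  have lens: "length s = CARD('n)" using len unfolding xs_def s_def by simp
  have ss: "sorted s" unfolding s_def by simp
  have xsi: "xs ! i = s ! (CARD('n) - Suc i)" if "i < CARD('n)" for i
    unfolding xs_def s_def[symmetric] using that lens by (simp add: rev_nth)
  have mono: "xs ! j \<le> xs ! i" if "i \<le> j" for i
    using xsi[of i] xsi[of j] that j lens by (auto intro!: sorted_nth_mono[OF ss])
  have mono2: "xs ! i \<le> xs ! j" if "j \<le> i" "i < CARD('n)" for i
    using xsi[of i] xsi[of j] that j lens by (auto intro!: sorted_nth_mono[OF ss])
  have "card {..j} \<le> card {k. k < length xs \<and> xs ! j \<le> xs ! k}"
    by (rule card_mono) (use mono j len in auto)
  then show "j + 1 \<le> card {i. xs ! j \<le> d i}"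
    using card_filter_mset[OF ms, of "\<lambda>y. xs ! j \<le> y"] by simp
  have "card {j..<CARD('n)} \<le> card {k. k < length xs \<and> xs ! k \<le> xs ! j}"
    by (rule card_mono) (use mono2 j len in auto)
  then show "CARD('n) - j \<le> card {i. d i \<le> xs ! j}"
    using card_filter_mset[OF ms, of "\<lambda>y. y \<le> xs ! j"] by simp
  have "xs ! j \<in> set xs" using j len by simp
  then have "xs ! j \<in># mset xs" by simp
  then show "xs ! j \<in> range d" unfolding ms by auto
qed

lemma norm_mat_vec:
  fixes E :: "real^'n^'m" and z :: "real^'n"
  shows "norm (E *v z) \<le> norm E * norm z"
proof -
  have "(E *v z) \<bullet> (E *v z) = (\<Sum>i\<in>UNIV. (E $ i \<bullet> z)\<^sup>2)"
    by (simp add: inner_vec_def matrix_vector_mult_def power2_eq_square)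
  also have "\<dots> \<le> (\<Sum>i\<in>UNIV. (E $ i \<bullet> E $ i) * (z \<bullet> z))"
  proof (rule sum_mono)
    fix i
    have "\<bar>E $ i \<bullet> z\<bar> \<le> norm (E $ i) * norm z" by (rule Cauchy_Schwarz_ineq2)
    then have "(E $ i \<bullet> z)\<^sup>2 \<le> (norm (E $ i) * norm z)\<^sup>2"
      by (metis abs_ge_zero power2_abs power_mono)
    then show "(E $ i \<bullet> z)\<^sup>2 \<le> (E $ i \<bullet> E $ i) * (z \<bullet> z)"
      by (simp add: power_mult_distrib dot_square_norm)
  qed
  also have "\<dots> = (E \<bullet> E) * (z \<bullet> z)" by (simp add: inner_vec_def sum_distrib_right)
  finally have "(norm (E *v z))\<^sup>2 \<le> (norm E * norm z)\<^sup>2"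
    by (simp add: power_mult_distrib dot_square_norm)
  then show ?thesis by (rule power2_le_imp_le) simp
qed

lemma quad_pert:
  fixes E :: "real^'n^'n" and z :: "real^'n"
  shows "\<bar>z \<bullet> (E *v z)\<bar> \<le> norm E * (z \<bullet> z)"
proof -
  have "\<bar>z \<bullet> (E *v z)\<bar> \<le> norm z * norm (E *v z)" by (rule Cauchy_Schwarz_ineq2)
  also have "\<dots> \<le> norm z * (norm E * norm z)" by (simp add: mult_left_mono norm_mat_vec)
  also have "\<dots> = norm E * (norm z)\<^sup>2" by (simp add: power2_eq_square)
  also have "\<dots> = norm E * (z \<bullet> z)" by (simp only: power2_norm_eq_inner)
  finally show ?thesis .
qed

context onb
begin

lemma orth_span:
  assumes "z \<in> span (u ` I)" "i \<notin> I"
  shows "u i \<bullet> z = 0"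
proof -
  obtain c where "z = (\<Sum>v\<in>u ` I. c v *\<^sub>R v)"
    using assms(1) span_finite[of "u ` I"] by auto
  then have "u i \<bullet> z = (\<Sum>v\<in>u ` I. c v * (u i \<bullet> v))" by (simp add: inner_sum_right)
  also have "\<dots> = 0" using assms(2) on by (auto intro!: sum.neutral)
  finally show ?thesis .
qed

lemma dim_span_img: "dim (span (u ` I)) = card I"
proof -
  have "independent (u ` I)" by (rule independent_mono[OF indep]) auto
  then have "dim (span (u ` I)) = card (u ` I)" by (rule dim_span_eq_card_independent)
  also have "\<dots> = card I" by (rule card_image[OF inj_on_subset[OF inj_u subset_UNIV]])
  finally show ?thesis .
qed

lemma quad_lower:
  fixes A :: "real^'n^'n"
  assumes ev: "\<And>i. A *v u i = d i *\<^sub>R u i"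
    and z: "z \<in> span (u ` I)" and I: "\<And>i. i \<in> I \<Longrightarrow> t \<le> d i"
  shows "t * (z \<bullet> z) \<le> z \<bullet> (A *v z)"
proof -
  have "t * (z \<bullet> z) = (\<Sum>i\<in>UNIV. t * (u i \<bullet> z)\<^sup>2)" by (simp add: norm_sq[of z] sum_distrib_left)
  also have "\<dots> \<le> (\<Sum>i\<in>UNIV. d i * (u i \<bullet> z)\<^sup>2)"
  proof (rule sum_mono)
    fix i show "t * (u i \<bullet> z)\<^sup>2 \<le> d i * (u i \<bullet> z)\<^sup>2"
      using I[of i] orth_span[OF z, of i] by (cases "i \<in> I") (auto intro: mult_right_mono)
  qed
  also have "\<dots> = z \<bullet> (A *v z)" by (simp add: quad_eig[OF ev])
  finally show ?thesis .
qed

lemma quad_upper: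
  fixes A :: "real^'n^'n"
  assumes ev: "\<And>i. A *v u i = d i *\<^sub>R u i"
    and z: "z \<in> span (u ` I)" and I: "\<And>i. i \<in> I \<Longrightarrow> d i \<le> t"
  shows "z \<bullet> (A *v z) \<le> t * (z \<bullet> z)"
proof -
  have "z \<bullet> (A *v z) = (\<Sum>i\<in>UNIV. d i * (u i \<bullet> z)\<^sup>2)" by (simp add: quad_eig[OF ev])
  also have "\<dots> \<le> (\<Sum>i\<in>UNIV. t * (u i \<bullet> z)\<^sup>2)"
  proof (rule sum_mono)
    fix i show "d i * (u i \<bullet> z)\<^sup>2 \<le> t * (u i \<bullet> z)\<^sup>2"
      using I[of i] orth_span[OF z, of i] by (cases "i \<in> I") (auto intro: mult_right_mono)
  qed
  also have "\<dots> = t * (z \<bullet> z)" by (simp add: norm_sq[of z] sum_distrib_left)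
  finally show ?thesis .
qed

end

lemma weyl:
  fixes A B :: "real^'n^'n"
  assumes "onb u" and evA: "\<And>i. A *v u i = a i *\<^sub>R u i"
    and "onb w" and evB: "\<And>i. B *v w i = b i *\<^sub>R w i"
    and j: "j < CARD('n)"
  defines "xa \<equiv> rev (sorted_list_of_multiset (image_mset a (mset_set UNIV)))"
    and "xb \<equiv> rev (sorted_list_of_multiset (image_mset b (mset_set UNIV)))"
  shows "xb ! j - norm (A - B) \<le> xa ! j"
proof -
  interpret U: onb u by fact
  interpret W: onb w by fact
  define I where "I = {i. xb ! j \<le> b i}"
  define J where "J = {i. a i \<le> xa ! j}"
  have cI: "j + 1 \<le> card I" unfolding I_def xb_def using sorted_count(1)[OF j] by blast
  have cJ: "CARD('n) - j \<le> card J" unfolding J_def xa_def using sorted_count(2)[OF j] by blast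
  define V where "V = span (w ` I)"
  define W where "W = span (u ` J)"
  have sV: "subspace V" "subspace W" unfolding V_def W_def by auto
  have "dim {x + y |x y. x \<in> V \<and> y \<in> W} + dim (V \<inter> W) = dim V + dim W"
    by (rule dim_sums_Int[OF sV])
  moreover have "dim {x + y |x y. x \<in> V \<and> y \<in> W} \<le> CARD('n)" by (rule dim_subset_UNIV_cart)
  moreover have "dim V = card I" unfolding V_def by (rule W.dim_span_img)
  moreover have "dim W = card J" unfolding W_def by (rule U.dim_span_img)
  ultimately have "dim (V \<inter> W) \<ge> 1" using cI cJ j by linarith
  then obtain z where zV: "z \<in> V" and zW: "z \<in> W" and z0: "z \<noteq> 0"
  proof -
    assume h: "\<And>z. z \<in> V \<Longrightarrow> z \<in> W \<Longrightarrow> z \<noteq> 0 \<Longrightarrow> thesis"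
    show thesis
    proof (rule ccontr)
      assume "\<not> thesis"
      then have "V \<inter> W \<subseteq> {0}" using h by blast
      then have "dim (V \<inter> W) \<le> dim {0::real^'n}" by (rule dim_subset)
      moreover have "dim {0::real^'n} = 0" by (simp add: dim_eq_0)
      ultimately show False using \<open>dim (V \<inter> W) \<ge> 1\<close> by linarith
    qed
  qed
  have lo: "xb ! j * (z \<bullet> z) \<le> z \<bullet> (B *v z)"
    by (rule W.quad_lower[OF evB zV[unfolded V_def]]) (simp add: I_def)
  have up: "z \<bullet> (A *v z) \<le> xa ! j * (z \<bullet> z)"
    by (rule U.quad_upper[OF evA zW[unfolded W_def]]) (simp add: J_def)
  have "z \<bullet> (A *v z) = z \<bullet> (B *v z) + z \<bullet> ((A - B) *v z)"
    by (simp add: matrix_vector_mult_diff_rdistrib inner_diff_right)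
  moreover have "\<bar>z \<bullet> ((A - B) *v z)\<bar> \<le> norm (A - B) * (z \<bullet> z)" by (rule quad_pert)
  ultimately have "(xb ! j - norm (A - B)) * (z \<bullet> z) \<le> xa ! j * (z \<bullet> z)"
    using lo up by (simp add: algebra_simps)
  moreover have "z \<bullet> z > 0" using z0 by simp
  ultimately show ?thesis by simp
qed

lemma grad_works:
  fixes \<phi> :: "real^'n^'m \<Rightarrow> real"
  assumes "\<phi> differentiable (at M)"
  shows "(\<phi> has_derivative (\<lambda>E. E \<bullet> grad \<phi> M)) (at M)"
proof -
  obtain D where D: "(\<phi> has_derivative D) (at M)" using assms differentiable_def by blast
  have lin: "linear D" using D has_derivative_linear by blast
  define G where "G = (\<Sum>b\<in>Basis. D b *\<^sub>R b)"
  have "E \<bullet> G = D E" for E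
  proof -
    have "E \<bullet> G = (\<Sum>b\<in>Basis. (E \<bullet> b) * D b)" unfolding G_def by (simp add: inner_sum_right mult.commute)
    also have "\<dots> = D (\<Sum>b\<in>Basis. (E \<bullet> b) *\<^sub>R b)"
      by (simp add: linear_sum[OF lin] linear_cmul[OF lin])
    also have "\<dots> = D E" by (simp add: euclidean_representation)
    finally show ?thesis .
  qed
  then have "(\<phi> has_derivative (\<lambda>E. E \<bullet> G)) (at M)" using D by (simp add: fun_eq_iff[symmetric])
  then have "\<exists>G. (\<phi> has_derivative (\<lambda>E. E \<bullet> G)) (at M)" by blast
  then show ?thesis unfolding grad_def by (rule someI_ex)
qed

lemma line_deriv1:
  fixes \<phi> :: "real^'n^'m \<Rightarrow> real"
  assumes "\<phi> differentiable (at (M0 + t *\<^sub>R E))"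
  shows "((\<lambda>t. \<phi> (M0 + t *\<^sub>R E)) has_real_derivative (E \<bullet> grad \<phi> (M0 + t *\<^sub>R E))) (at t)"
proof -
  have l: "((\<lambda>t. M0 + t *\<^sub>R E) has_derivative (\<lambda>h. h *\<^sub>R E)) (at t)"
    by (auto intro!: derivative_eq_intros)
  have "((\<lambda>t. \<phi> (M0 + t *\<^sub>R E)) has_derivative (\<lambda>h. (h *\<^sub>R E) \<bullet> grad \<phi> (M0 + t *\<^sub>R E))) (at t)"
    using has_derivative_compose[OF l grad_works[OF assms]] by (simp add: o_def)
  moreover have "(\<lambda>h. (h *\<^sub>R E) \<bullet> grad \<phi> (M0 + t *\<^sub>R E)) = (*) (E \<bullet> grad \<phi> (M0 + t *\<^sub>R E))"
    by (rule ext) simp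
  ultimately show ?thesis unfolding has_field_derivative_def by simp
qed

lemma line_deriv2:
  fixes \<phi> :: "real^'n^'m \<Rightarrow> real"
  assumes "grad \<phi> differentiable (at (M0 + t *\<^sub>R E))"
  shows "((\<lambda>t. E \<bullet> grad \<phi> (M0 + t *\<^sub>R E)) has_real_derivative (hess \<phi> (M0 + t *\<^sub>R E) E \<bullet> E)) (at t)"
proof -
  let ?H = "frechet_derivative (grad \<phi>) (at (M0 + t *\<^sub>R E))"
  have H: "(grad \<phi> has_derivative ?H) (at (M0 + t *\<^sub>R E))"
    using assms frechet_derivative_works by blast
  have lin: "linear ?H" using H has_derivative_linear by blast
  have l: "((\<lambda>t. M0 + t *\<^sub>R E) has_derivative (\<lambda>h. h *\<^sub>R E)) (at t)"
    by (auto intro!: derivative_eq_intros)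
  have "((\<lambda>t. grad \<phi> (M0 + t *\<^sub>R E)) has_derivative (\<lambda>h. ?H (h *\<^sub>R E))) (at t)"
    using has_derivative_compose[OF l H] by (simp add: o_def)
  then have "((\<lambda>t. E \<bullet> grad \<phi> (M0 + t *\<^sub>R E)) has_derivative (\<lambda>h. E \<bullet> ?H (h *\<^sub>R E))) (at t)"
    by (rule has_derivative_inner_right)
  moreover have "(\<lambda>h. E \<bullet> ?H (h *\<^sub>R E)) = (*) (hess \<phi> (M0 + t *\<^sub>R E) E \<bullet> E)"
    by (rule ext) (simp add: linear_cmul[OF lin] hess_def inner_commute mult.commute)
  ultimately show ?thesis unfolding has_field_derivative_def by simp
qed

lemma convex_growth_1d:
  fixes g g' g'' :: "real \<Rightarrow> real"
  assumes d1: "\<And>t. (g has_real_derivative g' t) (at t)"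
    and d2: "\<And>t. (g' has_real_derivative g'' t) (at t)"
    and c: "\<And>t. c \<le> g'' t"
    and g0: "g' 0 = 0"
  shows "g 0 + c / 2 \<le> g 1"
proof -
  define h where "h t = g t - c / 2 * t\<^sup>2" for t
  define h' where "h' t = g' t - c * t" for t
  have dh: "(h has_real_derivative h' t) (at t)" for t
    unfolding h_def h'_def by (rule derivative_eq_intros d1 refl | simp)+
  have dh': "(h' has_real_derivative (g'' t - c)) (at t)" for t
    unfolding h'_def by (rule derivative_eq_intros d2 refl | simp)+
  have h'mono: "h' 0 \<le> h' x" if "0 \<le> x" for x
    by (rule DERIV_nonneg_imp_nondecreasing[OF that]) (use dh' c in force)
  have "h 0 \<le> h 1"
    by (rule DERIV_nonneg_imp_nondecreasing) (use dh h'mono g0 h'_def in force)+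
  then show ?thesis unfolding h_def by simp
qed

lemma growth:
  fixes \<phi> :: "real^'n^'m \<Rightarrow> real"
  assumes tw: "twice_differentiable \<phi>"
    and hessb: "\<And>t. c \<le> hess \<phi> (M0 + t *\<^sub>R E) E \<bullet> E"
    and min: "\<And>M. \<phi> M0 \<le> \<phi> M"
  shows "\<phi> M0 + c / 2 \<le> \<phi> (M0 + E)"
proof -
  define g where "g t = \<phi> (M0 + t *\<^sub>R E)" for t
  define g' where "g' t = E \<bullet> grad \<phi> (M0 + t *\<^sub>R E)" for t
  have d1: "(g has_real_derivative g' t) (at t)" for t
    unfolding g_def g'_def by (rule line_deriv1) (use tw twice_differentiable_def in blast)
  have d2: "(g' has_real_derivative (hess \<phi> (M0 + t *\<^sub>R E) E \<bullet> E)) (at t)" for t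
    unfolding g'_def by (rule line_deriv2) (use tw twice_differentiable_def in blast)
  have "g' 0 = 0"
    by (rule DERIV_local_min[OF d1[of 0], of 1]) (auto simp: g_def min)
  from convex_growth_1d[OF d1 d2 hessb this] show ?thesis unfolding g_def by simp
qed

lemma subspace_range_mat: "subspace (range (\<lambda>x. (A::real^'n^'m) *v x))"
  by (rule linear_subspace_image[OF matrix_vector_mul_linear subspace_UNIV])

lemma rank_add_le:
  fixes A B :: "real^'n^'m"
  shows "rank (A + B) \<le> rank A + rank B"
proof -
  let ?RA = "range (\<lambda>x. A *v x)" and ?RB = "range (\<lambda>x. B *v x)"
  have "range (\<lambda>x. (A + B) *v x) \<subseteq> {x + y |x y. x \<in> ?RA \<and> y \<in> ?RB}"
    by (auto simp: matrix_vector_mult_add_rdistrib)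
  then have "rank (A + B) \<le> dim {x + y |x y. x \<in> ?RA \<and> y \<in> ?RB}"
    unfolding rank_dim_range by (rule dim_subset)
  also have "\<dots> \<le> dim ?RA + dim ?RB"
    using dim_sums_Int[OF subspace_range_mat[of A] subspace_range_mat[of B]] by linarith
  finally show ?thesis by (simp add: rank_dim_range)
qed

lemma rank_scale_le:
  fixes A :: "real^'n^'m"
  shows "rank (c *\<^sub>R A) \<le> rank A"
proof -
  have "range (\<lambda>x. (c *\<^sub>R A) *v x) \<subseteq> range (\<lambda>x. A *v x)"
  proof
    fix y assume "y \<in> range (\<lambda>x. (c *\<^sub>R A) *v x)"
    then obtain x where "y = (c *\<^sub>R A) *v x" by blast
    then have "y = A *v (c *\<^sub>R x)"
      by (metis matrix_vector_mult_scaleR scaleR_matrix_vector_assoc)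
    then show "y \<in> range (\<lambda>x. A *v x)" by blast
  qed
  then show ?thesis unfolding rank_dim_range by (rule dim_subset)
qed

lemma rank_XXt:
  fixes X :: "real^'r^'n"
  shows "rank (X ** transpose X) \<le> CARD('r)"
  using rank_mul_le_right[of X "transpose X"] rank_bound[of "transpose X"] by linarith

lemma psd_factor:
  fixes M :: "real^'n^'n"
  assumes psd: "psd M" and rk: "rank M \<le> CARD('r)"
  shows "\<exists>Y :: real^'r^'n. Y ** transpose Y = M"
proof -
  have sym: "transpose M = M" using psd psd_def by blast
  obtain u :: "'n \<Rightarrow> real^'n" and d :: "'n \<Rightarrow> real" where on: "\<And>i j. u i \<bullet> u j = (if i = j then 1 else 0)"
    and ev: "\<And>i. M *v u i = d i *\<^sub>R u i" using spectral[OF sym] by blast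
  interpret onb u using on by unfold_locales
  have dnn: "0 \<le> d i" for i
  proof -
    have "0 \<le> u i \<bullet> (M *v u i)" using psd psd_def by blast
    also have "\<dots> = d i" using ev[of i] on[of i i] by simp
    finally show ?thesis .
  qed
  define I where "I = {i. d i \<noteq> 0}"
  have "u ` I \<subseteq> range (\<lambda>x. M *v x)"
  proof
    fix y assume "y \<in> u ` I"
    then obtain i where i: "i \<in> I" "y = u i" by blast
    have "M *v ((1 / d i) *\<^sub>R u i) = u i" using i(1) ev[of i] unfolding I_def
      by (simp add: matrix_vector_mult_scaleR)
    then show "y \<in> range (\<lambda>x. M *v x)" using i(2) by (metis rangeI)
  qed
  then have "dim (span (u ` I)) \<le> rank M" unfolding rank_dim_range
    by (metis dim_span dim_subset)
  then have cI: "card I \<le> CARD('r)" using rk dim_span_img[of I] by linarith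
  obtain g :: "'n \<Rightarrow> 'r" where g: "inj_on g I" using card_le_inj[OF finite finite, of I "UNIV :: 'r set"] cI
    by auto
  define c where "c j = (\<Sum>i\<in>{i\<in>I. g i = j}. sqrt (d i) *\<^sub>R u i)" for j
  define Y where "Y = (\<chi> a j. c j $ a :: real^'r^'n)"
  have cg: "c (g i) = sqrt (d i) *\<^sub>R u i" if "i \<in> I" for i
  proof -
    have "{i'\<in>I. g i' = g i} = {i}" using g that by (auto simp: inj_on_def)
    then show ?thesis unfolding c_def by simp
  qed
  have c0: "c j = 0" if "j \<notin> g ` I" for j
  proof -
    have "{i\<in>I. g i = j} = {}" using that by auto
    then show ?thesis unfolding c_def by (simp only: sum.empty)
  qed
  have "(Y ** transpose Y) *v x = M *v x" for x
  proof -
    have t: "transpose Y *v x = (\<chi> j. c j \<bullet> x)"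
      unfolding Y_def by (simp add: vec_eq_iff matrix_vector_mult_def transpose_def inner_vec_def mult.commute)
    have yv: "Y *v y = (\<Sum>j\<in>UNIV. (y $ j) *\<^sub>R c j)" for y
      unfolding Y_def by (simp add: vec_eq_iff matrix_vector_mult_def sum_component mult.commute)
    have "(Y ** transpose Y) *v x = (\<Sum>j\<in>UNIV. (c j \<bullet> x) *\<^sub>R c j)"
      by (simp only: matrix_vector_mul_assoc[symmetric] t yv vec_lambda_beta)
    also have "\<dots> = (\<Sum>j\<in>g ` I. (c j \<bullet> x) *\<^sub>R c j)"
      by (rule sum.mono_neutral_right) (auto simp: c0)
    also have "\<dots> = (\<Sum>i\<in>I. (c (g i) \<bullet> x) *\<^sub>R c (g i))"
      by (rule sum.reindex[OF g, unfolded o_def])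
    also have "\<dots> = (\<Sum>i\<in>I. (d i * (u i \<bullet> x)) *\<^sub>R u i)"
    proof (rule sum.cong[OF refl])
      fix i assume "i \<in> I"
      then show "(c (g i) \<bullet> x) *\<^sub>R c (g i) = (d i * (u i \<bullet> x)) *\<^sub>R u i"
      proof -
        have sq: "sqrt (d i) * sqrt (d i) = d i" using dnn[of i] by simp
        have "(c (g i) \<bullet> x) *\<^sub>R c (g i) = ((sqrt (d i) * sqrt (d i)) * (u i \<bullet> x)) *\<^sub>R u i"
          using cg[OF \<open>i \<in> I\<close>] by (simp add: ac_simps)
        then show ?thesis by (simp only: sq)
      qed
    qed
    also have "\<dots> = (\<Sum>i\<in>UNIV. (d i * (u i \<bullet> x)) *\<^sub>R u i)"
      by (rule sum.mono_neutral_left) (auto simp: I_def)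
    also have "\<dots> = M *v x" by (rule apply_eig[OF ev, symmetric])
    finally show ?thesis .
  qed
  then show ?thesis by (auto simp: matrix_eq)
qed


lemma eigval_eig:
  fixes A :: "real^'n^'n"
  assumes "onb u" and ev: "\<And>i. A *v u i = d i *\<^sub>R u i"
  shows "eigval A k = rev (sorted_list_of_multiset (image_mset d (mset_set UNIV))) ! (k - 1)"
  unfolding eigval_def proots_eig[OF assms] ..

lemma sym_XXt:
  fixes X :: "real^'r^'n"
  shows "transpose (X ** transpose X) = X ** transpose X"
  by (simp add: matrix_transpose_mul)

theorem lemma26:
  fixes \<phi> :: "real^'n^'n \<Rightarrow> real"
    and L \<mu> :: real
    and Mstar :: "real^'n^'n"
    and Xstar X :: "real^'r^'n"
  defines "f \<equiv> (\<lambda>Y :: real^'r^'n. \<phi> (Y ** transpose Y))"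
  assumes twice: "twice_differentiable \<phi>"
    and lip: "gradient_lipschitz L \<phi>"
    and rsc: "restricted_strongly_convex \<mu> (2 * CARD('r)) \<phi>"
    and mu_pos: "0 < \<mu>"
    and Mstar_min: "\<forall>M. \<phi> Mstar \<le> \<phi> M"
    and Mstar_psd: "psd Mstar"
    and rank_le: "rank Mstar \<le> CARD('r)"
    and Xstar_min: "\<forall>Y. f Xstar \<le> f Y"
    and close: "f X - f Xstar \<le> \<mu> / (2 * (1 + L / \<mu>)) * (eigval Mstar (rank Mstar))\<^sup>2"
  shows "eigval (X ** transpose X) (rank Mstar)
           \<ge> (sqrt (1 + L / \<mu>) - 1) * norm (X ** transpose X - Mstar)"
proof -
  define A where "A = X ** transpose X"
  define k where "k = rank Mstar"
  define D where "D = norm (A - Mstar)"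
  have L0: "0 \<le> L"
  proof -
    have "norm (grad \<phi> (0 + mat 1) - grad \<phi> 0) \<le> L * norm (mat 1 :: real^'n^'n)"
      by (rule lip[unfolded gradient_lipschitz_def, rule_format])
    moreover have "(mat 1 :: real^'n^'n) \<noteq> 0"
    proof
      assume "(mat 1 :: real^'n^'n) = 0"
      then have "(mat 1 :: real^'n^'n) $ undefined $ undefined = 0" by simp
      then show False by (simp add: mat_def)
    qed
    then have "norm (mat 1 :: real^'n^'n) > 0" by simp
    ultimately have "0 \<le> L * norm (mat 1 :: real^'n^'n)" "norm (mat 1 :: real^'n^'n) > 0"
      using norm_ge_zero order_trans by blast+
    then show ?thesis by (simp add: zero_le_mult_iff)
  qed
  have symM: "transpose Mstar = Mstar" using Mstar_psd psd_def by blast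
  obtain w :: "'n \<Rightarrow> real^'n" and b :: "'n \<Rightarrow> real" where
    onw: "\<And>i j. w i \<bullet> w j = (if i = j then 1 else 0)" and evB: "\<And>i. Mstar *v w i = b i *\<^sub>R w i"
    using spectral[OF symM] by blast
  have onbw: "onb w" using onw by unfold_locales
  have bnn: "0 \<le> b i" for i
  proof -
    have "0 \<le> w i \<bullet> (Mstar *v w i)" using Mstar_psd psd_def by blast
    also have "\<dots> = b i" using evB[of i] onw[of i i] by simp
    finally show ?thesis .
  qed
  obtain u :: "'n \<Rightarrow> real^'n" and a :: "'n \<Rightarrow> real" where
    onu: "\<And>i j. u i \<bullet> u j = (if i = j then 1 else 0)" and evA: "\<And>i. A *v u i = a i *\<^sub>R u i"
    using spectral[OF sym_XXt[of X]] unfolding A_def by blast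
  have onbu: "onb u" using onu by unfold_locales
  have j: "k - 1 < CARD('n)"
  proof -
    have "rank Mstar \<le> CARD('n)" using rank_bound[of Mstar] by simp
    moreover have "0 < CARD('n)" by simp
    ultimately show ?thesis unfolding k_def by linarith
  qed
  define lam where "lam = eigval Mstar k"
  have lamB: "lam = rev (sorted_list_of_multiset (image_mset b (mset_set UNIV))) ! (k - 1)"
    unfolding lam_def by (rule eigval_eig[OF onbw evB])
  have lam0: "0 \<le> lam" using sorted_count(3)[OF j, of b] bnn unfolding lamB by auto
  have weylk: "lam - D \<le> eigval A k"
    unfolding lamB eigval_eig[OF onbu evA] D_def by (rule weyl[OF onbu evA onbw evB j])
  obtain Y :: "real^'r^'n" where Y: "Y ** transpose Y = Mstar" using psd_factor[OF Mstar_psd rank_le] by blast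
  have fstar: "f Xstar \<le> \<phi> Mstar" using Xstar_min Y unfolding f_def by metis
  define E where "E = A - Mstar"
  have rA: "rank A \<le> CARD('r)" unfolding A_def by (rule rank_XXt)
  have rE: "rank E \<le> 2 * CARD('r)"
  proof -
    have "E = A + (-1) *\<^sub>R Mstar" unfolding E_def by simp
    then have "rank E \<le> rank A + rank ((-1) *\<^sub>R Mstar)" using rank_add_le by metis
    also have "\<dots> \<le> rank A + rank Mstar" using rank_scale_le[of "-1" Mstar] by linarith
    finally show ?thesis using rA rank_le by linarith
  qed
  have rt: "rank (Mstar + t *\<^sub>R E) \<le> 2 * CARD('r)" for t
  proof -
    have "Mstar + t *\<^sub>R E = (1 - t) *\<^sub>R Mstar + t *\<^sub>R A" unfolding E_def by (simp add: algebra_simps)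
    then have "rank (Mstar + t *\<^sub>R E) \<le> rank ((1 - t) *\<^sub>R Mstar) + rank (t *\<^sub>R A)" using rank_add_le by metis
    also have "\<dots> \<le> rank Mstar + rank A" using rank_scale_le add_mono by blast
    finally show ?thesis using rA rank_le by linarith
  qed
  have hb: "\<mu> * (norm E)\<^sup>2 \<le> hess \<phi> (Mstar + t *\<^sub>R E) E \<bullet> E" for t
    using rsc rt[of t] rE unfolding restricted_strongly_convex_def by blast
  have "\<phi> Mstar + \<mu> * (norm E)\<^sup>2 / 2 \<le> \<phi> (Mstar + E)"
    by (rule growth[OF twice hb]) (use Mstar_min in blast)
  moreover have "Mstar + E = A" unfolding E_def by simp
  ultimately have gr: "\<mu> / 2 * D\<^sup>2 \<le> f X - f Xstar" using fstar unfolding f_def A_def D_def E_def by simp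
  have c2: "\<mu> / 2 * D\<^sup>2 \<le> \<mu> / (2 * (1 + L / \<mu>)) * lam\<^sup>2"
    using gr close unfolding lam_def k_def by linarith
  define s where "s = sqrt (1 + L / \<mu>)"
  have kp: "1 + L / \<mu> > 0" using L0 mu_pos by (simp add: add_pos_nonneg)
  have s2: "s\<^sup>2 = 1 + L / \<mu>" unfolding s_def using real_sqrt_pow2[of "1 + L / \<mu>"] kp by linarith
  have s0: "0 \<le> s" unfolding s_def using kp by simp
  have "(1 + L / \<mu>) * D\<^sup>2 \<le> lam\<^sup>2"
  proof -
    define K where "K = 1 + L / \<mu>"
    have K: "K > 0" using kp K_def by simp
    have "\<mu> / (2 * K) * lam\<^sup>2 = \<mu> / 2 * (lam\<^sup>2 / K)" by simp
    then have "\<mu> / 2 * D\<^sup>2 \<le> \<mu> / 2 * (lam\<^sup>2 / K)" using c2 K_def by simp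
    then have "D\<^sup>2 \<le> lam\<^sup>2 / K" using mu_pos
      by (metis half_gt_zero mult_le_cancel_left_pos)
    then have "D\<^sup>2 * K \<le> lam\<^sup>2" using K by (simp add: pos_le_divide_eq)
    then show ?thesis unfolding K_def by (simp add: mult.commute)
  qed
  then have "(s * D)\<^sup>2 \<le> lam\<^sup>2" using s2 by (simp add: power_mult_distrib)
  then have sD: "s * D \<le> lam" using lam0 by (rule power2_le_imp_le)
  have "(s - 1) * D \<le> eigval A k" using sD weylk by (simp add: algebra_simps)
  then show ?thesis unfolding s_def A_def k_def D_def .
qed

end
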